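(* Let $G=(V,E)$ be a finite simple undirected graph and let $v\in V$. Suppose $v$ is unique under anonymity-cascade with $\ell=1$, i.e., there exists a node $u\in V$ adjacent to $v$ such that (i) no node $x\in V\setminus\{u\}$ is $1$-equivalent to $u$, and (ii) no node $v'\in V(N_1(u))\setminus\{u,v\}$ is $1$-equivalent to $v$. Then $v$ is unique under $2$-$k$-anonymity, i.e., no node $w\in V\setminus\{v\}$ is $2$-equivalent to $v$.
   Context: For nodes $v,w$, the distance $d(v,w)$ is the minimum number of edges on a path from $v$ to $w$ ($\infty$ if none). For $d\ge 0$ and $v\in V$, the $d$-neighborhood $N_d(v)$ is the subgraph of $G$ induced by all nodes at distance at most $d$ from $v$ (so $N_1(v)$ is the ego network of $v$, including $v$). A graph isomorphism between $H=(V_H,E_H)$ and $H'=(V_{H'},E_{H'})$ is a bijection $\phi:V_H\to V_{H'}$ with $\{\phi(a),\phi(b)\}\in E_{H'}$ iff $\{a,b\}\in E_H$. Two nodes $v,w\in V$ are $d$-equivalent if there is an isomorphism $\phi$ from $N_d(v)$ to $N_d(w)$ with $\phi(v)=w$. A node is unique under $d$-$k$-anonymity if it is $d$-equivalent to no other node of $G$. *)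

theory Defs
  imports Main "HOL-Library.Extended_Nat"
begin

definition simple_graph :: "'a set \<Rightarrow> ('a \<Rightarrow> 'a \<Rightarrow> bool) \<Rightarrow> bool" where
  "simple_graph V E \<longleftrightarrow> finite V \<and> (\<forall>x y. E x y \<longrightarrow> x \<in> V \<and> y \<in> V)
     \<and> (\<forall>x y. E x y \<longrightarrow> E y x) \<and> (\<forall>x. \<not> E x x)"

definition is_walk :: "'a set \<Rightarrow> ('a \<Rightarrow> 'a \<Rightarrow> bool) \<Rightarrow> 'a list \<Rightarrow> 'a \<Rightarrow> 'a \<Rightarrow> bool" where
  "is_walk V E p v w \<longleftrightarrow> p \<noteq> [] \<and> hd p = v \<and> last p = w \<and> set p \<subseteq> V
     \<and> (\<forall>i. Suc i < length p \<longrightarrow> E (p ! i) (p ! Suc i))"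

definition gdist :: "'a set \<Rightarrow> ('a \<Rightarrow> 'a \<Rightarrow> bool) \<Rightarrow> 'a \<Rightarrow> 'a \<Rightarrow> enat" where
  "gdist V E v w = Inf {enat (length p - 1) | p. is_walk V E p v w}"

definition nbhd :: "'a set \<Rightarrow> ('a \<Rightarrow> 'a \<Rightarrow> bool) \<Rightarrow> nat \<Rightarrow> 'a \<Rightarrow> 'a set" where
  "nbhd V E d v = {x \<in> V. gdist V E v x \<le> enat d}"

definition d_equiv :: "'a set \<Rightarrow> ('a \<Rightarrow> 'a \<Rightarrow> bool) \<Rightarrow> nat \<Rightarrow> 'a \<Rightarrow> 'a \<Rightarrow> bool" where
  "d_equiv V E d v w \<longleftrightarrow> (\<exists>\<phi>. bij_betw \<phi> (nbhd V E d v) (nbhd V E d w)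
     \<and> (\<forall>a\<in>nbhd V E d v. \<forall>b\<in>nbhd V E d v. E (\<phi> a) (\<phi> b) \<longleftrightarrow> E a b)
     \<and> \<phi> v = w)"

end

theory Submission
  imports Defs
begin

lemma walk_le:
  assumes "is_walk V E p x y" "length p = Suc d"
  shows "gdist V E x y \<le> enat d"
proof -
  have "enat (length p - 1) \<in> {enat (length p - 1) | p. is_walk V E p x y}" using assms(1) by blast
  hence "gdist V E x y \<le> enat (length p - 1)" unfolding gdist_def by (rule Inf_lower)
  thus ?thesis using assms(2) by simp
qed

lemma N1_char:
  assumes g: "simple_graph V E" and x: "x \<in> V"
  shows "nbhd V E 1 x = insert x {y. E x y}"
proof
  show "nbhd V E 1 x \<subseteq> insert x {y. E x y}"
  proof
    fix y assume y: "y \<in> nbhd V E 1 x"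
    hence le: "gdist V E x y \<le> enat 1" unfolding nbhd_def by auto
    have "\<exists>p. is_walk V E p x y \<and> length p - 1 \<le> 1"
    proof (rule ccontr)
      assume "\<not> ?thesis"
      hence "\<forall>s \<in> {enat (length p - 1) | p. is_walk V E p x y}. enat 2 \<le> s" by auto
      hence "enat 2 \<le> gdist V E x y" unfolding gdist_def by (intro Inf_greatest) blast
      with le have "enat 2 \<le> enat 1" by (rule order_trans[rotated])
      thus False by simp
    qed
    then obtain p where p: "is_walk V E p x y" "length p - 1 \<le> 1" by blast
    hence ne: "p \<noteq> []" and h: "hd p = x" and l: "last p = y" and st: "\<forall>i. Suc i < length p \<longrightarrow> E (p ! i) (p ! Suc i)"
      unfolding is_walk_def by auto
    have "length p = 1 \<or> length p = 2" using ne p(2) by (cases p) (auto simp: le_Suc_eq)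
    thus "y \<in> insert x {y. E x y}"
    proof
      assume "length p = 1" then obtain a where "p = [a]" by (cases p) auto
      thus ?thesis using h l by simp
    next
      assume "length p = 2" then obtain a b where "p = [a,b]"
        by (cases p; cases "tl p") auto
      thus ?thesis using h l st by force
    qed
  qed
next
  show "insert x {y. E x y} \<subseteq> nbhd V E 1 x"
  proof
    fix y assume "y \<in> insert x {y. E x y}"
    thus "y \<in> nbhd V E 1 x"
    proof
      assume "y = x"
      moreover have "is_walk V E [x] x x" using x unfolding is_walk_def by auto
      ultimately show ?thesis using walk_le[of V E "[x]" x x 0] x unfolding nbhd_def
        by (auto simp: enat_0)
    next
      assume e: "y \<in> {y. E x y}"
      hence "is_walk V E [x,y] x y" using g x unfolding is_walk_def simple_graph_def
        by (auto simp: less_Suc_eq)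
      thus ?thesis using walk_le[of V E "[x,y]" x y 1] g e unfolding nbhd_def simple_graph_def
        by (auto simp: one_enat_def)
    qed
  qed
qed

lemma N2_self: assumes "x \<in> V" shows "x \<in> nbhd V E 2 x"
proof -
  have "is_walk V E [x] x x" using assms unfolding is_walk_def by auto
  hence "gdist V E x x \<le> enat 0" using walk_le[of V E "[x]" x x 0] by simp
  also have "\<dots> \<le> enat 2" by simp
  finally show ?thesis using assms unfolding nbhd_def by simp
qed

lemma N2_1: assumes g: "simple_graph V E" "x \<in> V" "E x y" shows "y \<in> nbhd V E 2 x"
proof -
  have "y \<in> nbhd V E 1 x" using N1_char[OF assms(1,2)] assms(3) by auto
  thus ?thesis unfolding nbhd_def by (auto simp: one_enat_def numeral_eq_enat order_trans)
qed

lemma N2_2: assumes g: "simple_graph V E" "E x y" "E y z" shows "z \<in> nbhd V E 2 x"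
proof -
  have "is_walk V E [x,y,z] x z" using g unfolding is_walk_def simple_graph_def
    by (auto simp: less_Suc_eq)
  thus ?thesis using walk_le[of V E "[x,y,z]" x z 2] g unfolding nbhd_def simple_graph_def
    by auto
qed

lemma N1_sub_N2:
  assumes g: "simple_graph V E" "a \<in> V" and c: "c = a \<or> E a c"
  shows "nbhd V E 1 c \<subseteq> nbhd V E 2 a"
proof -
  have cV: "c \<in> V" using c g unfolding simple_graph_def by auto
  show ?thesis unfolding N1_char[OF g(1) cV]
    using c N2_self[OF g(2)] N2_1[OF g] N2_2[OF g(1)] by auto
qed

lemma local_iso:
  assumes g: "simple_graph V E"
    and bij: "bij_betw \<phi> A B"
    and adj: "\<forall>a\<in>A. \<forall>b\<in>A. E (\<phi> a) (\<phi> b) \<longleftrightarrow> E a b"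
    and c: "c \<in> V" "\<phi> c \<in> V"
    and sA: "nbhd V E 1 c \<subseteq> A" and sB: "nbhd V E 1 (\<phi> c) \<subseteq> B"
  shows "d_equiv V E 1 c (\<phi> c)"
proof -
  have cA: "c \<in> A" using sA N1_char[OF g c(1)] by auto
  have img: "\<phi> ` nbhd V E 1 c = nbhd V E 1 (\<phi> c)"
  proof
    show "\<phi> ` nbhd V E 1 c \<subseteq> nbhd V E 1 (\<phi> c)"
    proof
      fix y assume "y \<in> \<phi> ` nbhd V E 1 c"
      then obtain x where x: "x \<in> nbhd V E 1 c" "y = \<phi> x" by auto
      hence "x = c \<or> E c x" using N1_char[OF g c(1)] by auto
      thus "y \<in> nbhd V E 1 (\<phi> c)" using x adj cA sA unfolding N1_char[OF g c(2)] by auto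
    qed
  next
    show "nbhd V E 1 (\<phi> c) \<subseteq> \<phi> ` nbhd V E 1 c"
    proof
      fix y assume y: "y \<in> nbhd V E 1 (\<phi> c)"
      hence yB: "y \<in> B" using sB by auto
      then obtain x where x: "x \<in> A" "y = \<phi> x" using bij unfolding bij_betw_def by auto
      have "y = \<phi> c \<or> E (\<phi> c) y" using y N1_char[OF g c(2)] by auto
      hence "x = c \<or> E c x" using x adj cA bij unfolding bij_betw_def inj_on_def by auto
      thus "y \<in> \<phi> ` nbhd V E 1 c" using x unfolding N1_char[OF g c(1)] by auto
    qed
  qed
  have "bij_betw \<phi> (nbhd V E 1 c) (nbhd V E 1 (\<phi> c))"
    by (rule bij_betw_subset[OF bij sA img])
  thus ?thesis unfolding d_equiv_def using adj sA by blast
qed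

theorem theorem1:
  fixes V :: "'a set" and E :: "'a \<Rightarrow> 'a \<Rightarrow> bool" and v u :: 'a
  assumes "simple_graph V E"
    and "v \<in> V"
    and "u \<in> V" and "E u v"
    and "\<forall>x \<in> V - {u}. \<not> d_equiv V E 1 x u"
    and "\<forall>v' \<in> nbhd V E 1 u - {u, v}. \<not> d_equiv V E 1 v' v"
  shows "\<forall>w \<in> V - {v}. \<not> d_equiv V E 2 w v"
proof (intro ballI notI)
  note g = assms(1)
  fix w assume w: "w \<in> V - {v}" and de: "d_equiv V E 2 w v"
  then obtain \<phi> where bij: "bij_betw \<phi> (nbhd V E 2 w) (nbhd V E 2 v)"
    and adj: "\<forall>a\<in>nbhd V E 2 w. \<forall>b\<in>nbhd V E 2 w. E (\<phi> a) (\<phi> b) \<longleftrightarrow> E a b"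
    and pw: "\<phi> w = v" unfolding d_equiv_def by blast
  have wV: "w \<in> V" using w by auto
  have Evu: "E v u" using assms(4) g unfolding simple_graph_def by blast
  have uv: "u \<noteq> v" using assms(4) g unfolding simple_graph_def by blast
  have "u \<in> nbhd V E 2 v" using N2_1[OF g assms(2) Evu] .
  then obtain u' where u': "u' \<in> nbhd V E 2 w" "\<phi> u' = u" using bij unfolding bij_betw_def by (metis imageE)
  have wN: "w \<in> nbhd V E 2 w" using N2_self[OF wV] .
  have Ewu': "E w u'" using adj u' wN pw Evu by auto
  have u'V: "u' \<in> V" using u' unfolding nbhd_def by auto
  have "d_equiv V E 1 u' (\<phi> u')"
    apply (rule local_iso[OF g bij adj u'V])
    using u' assms(3) apply simp
    using N1_sub_N2[OF g wV] Ewu' apply blast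
    using N1_sub_N2[OF g assms(2)] u' Evu by auto
  hence uu: "u' = u" using assms(5) u' u'V by auto
  have wu: "w \<noteq> u" using uu u' pw uv by auto
  have "d_equiv V E 1 w (\<phi> w)"
    apply (rule local_iso[OF g bij adj wV])
    using pw assms(2) apply simp
    using N1_sub_N2[OF g wV] apply blast
    using N1_sub_N2[OF g assms(2)] pw by auto
  moreover have "w \<in> nbhd V E 1 u - {u, v}"
    using N1_char[OF g assms(3)] Ewu' uu g w wu unfolding simple_graph_def by auto
  ultimately show False using assms(6) pw by auto
qed

end
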